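(* Let $(X,d)$ be a complete metric space and let $G:X\times X\to X$ be a mapping such that (a) $G(x,x)=x$ for all $x\in X$, and (b) for $x,y\in X$, $G(x,y)=x$ implies $y=x$. Let $T:X\to P_{cl}(X)$ be a multivalued operator with $SFix(T)\neq\emptyset$ and let $T_G(x)=\{G(x,u):u\in T(x)\}$ be the admissible perturbation of $T$ corresponding to $G$. Suppose there exist $\alpha,\beta,\gamma\ge0$ with $\alpha+\beta+\gamma<1$ such that $$H(T_G(x),T_G(y))\le\alpha d(x,y)+\beta D(x,T_G(y))+\gamma D(y,T_G(x))\quad\text{for all }x,y\in X,$$ so that $SFix(T)=\{x^*\}$ for some $x^*$, and suppose moreover that (ii) there exists $l\in(0,1)$ with $H(T(x),\{x^*\})\le l\,H(T_G(x),\{x^*\})$ for all $x\in X$, and (iii) there exists $L>0$ with $D(x,T_G(x))\le L\,D(x,T(x))$ for all $x\in X$. Then the strict fixed point problem $T(x)=\{x\}$ is well-posed: $T$ has a unique strict fixed point $x^*$, and for every sequence $(u_n)_{n\in\mathbb N}\subset X$ with $D(u_n,T(u_n))\to0$ we have $u_n\to x^*$.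
   Context: $P_{cl}(X)$ is the family of nonempty closed subsets of $X$; $SFix(T)=\{x:T(x)=\{x\}\}$. For nonempty $A,B\subseteq X$: $D(a,B)=\inf_{b\in B}d(a,b)$, $e(A,B)=\sup_{a\in A}D(a,B)$, $H(A,B)=\max\{e(A,B),e(B,A)\}$. *)

theory Defs
  imports "HOL-Analysis.Analysis"
begin

text \<open>Gap functional D(a,B) = inf_{b in B} d(a,b): this is the library's infdist.\<close>

definition excess :: "'a::metric_space set \<Rightarrow> 'a set \<Rightarrow> ereal" where
  "excess A B = (SUP a\<in>A. ereal (infdist a B))"

definition Hpm :: "'a::metric_space set \<Rightarrow> 'a set \<Rightarrow> ereal" where
  "Hpm A B = max (excess A B) (excess B A)"

definition SFix :: "('a \<Rightarrow> 'a set) \<Rightarrow> 'a set" where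
  "SFix T = {x. T x = {x}}"

definition admissible_pert :: "('a \<Rightarrow> 'a \<Rightarrow> 'a) \<Rightarrow> ('a \<Rightarrow> 'a set) \<Rightarrow> 'a \<Rightarrow> 'a set" where
  "admissible_pert G T x = {G x u | u. u \<in> T x}"

end

theory Submission
  imports Defs
begin

theorem mainTheorem6:
  fixes G :: "'a::{metric_space,complete_space} \<Rightarrow> 'a \<Rightarrow> 'a"
    and T :: "'a \<Rightarrow> 'a set"
    and \<alpha> \<beta> \<gamma> l L :: real
    and xs :: 'a
  assumes G_refl: "\<And>x. G x x = x"
    and G_inj: "\<And>x y. G x y = x \<Longrightarrow> y = x"
    and T_ne: "\<And>x. T x \<noteq> {}"
    and T_closed: "\<And>x. closed (T x)"
    and xs_SFix: "xs \<in> SFix T"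
    and coeffs: "\<alpha> \<ge> 0" "\<beta> \<ge> 0" "\<gamma> \<ge> 0" "\<alpha> + \<beta> + \<gamma> < 1"
    and contr: "\<And>x y. Hpm (admissible_pert G T x) (admissible_pert G T y)
        \<le> ereal (\<alpha> * dist x y + \<beta> * infdist x (admissible_pert G T y)
                 + \<gamma> * infdist y (admissible_pert G T x))"
    and l: "0 < l" "l < 1"
    and ii: "\<And>x. Hpm (T x) {xs} \<le> ereal l * Hpm (admissible_pert G T x) {xs}"
    and L: "L > 0"
    and iii: "\<And>x. infdist x (admissible_pert G T x) \<le> L * infdist x (T x)"
  shows "SFix T = {xs} \<and>
    (\<forall>u :: nat \<Rightarrow> 'a. (\<lambda>n. infdist (u n) (T (u n))) \<longlonglongrightarrow> 0 \<longrightarrow> u \<longlonglongrightarrow> xs)"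
proof -
  define TG where "TG = admissible_pert G T"
  define s where "s = \<alpha> + \<beta> + \<gamma>"
  have xsT: "T xs = {xs}" using xs_SFix by (simp add: SFix_def)
  have TGxs: "TG xs = {xs}" by (simp add: TG_def admissible_pert_def xsT G_refl)
  have TGne: "TG u \<noteq> {}" for u using T_ne[of u] by (auto simp: TG_def admissible_pert_def)
  have ge: "c \<le> infdist x A" if "A \<noteq> {}" "\<And>a. a \<in> A \<Longrightarrow> c \<le> dist x a" for c x and A :: "'a set"
    using that unfolding infdist_def by (auto intro!: cINF_greatest)
  have key: "(1 - s) * dist u xs \<le> (1 + \<gamma>) * infdist u (TG u)" for u
  proof -
    define B where "B = \<alpha> * dist u xs + \<beta> * dist u xs + \<gamma> * (dist u xs + infdist u (TG u))"
    have H: "Hpm (TG u) {xs} \<le> ereal B"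
    proof -
      have "Hpm (TG u) {xs} \<le> ereal (\<alpha> * dist u xs + \<beta> * infdist u (TG xs) + \<gamma> * infdist xs (TG u))"
        using contr[of u xs] TGxs by (simp add: TG_def)
      also have "\<dots> \<le> ereal B"
      proof -
        have "infdist xs (TG u) \<le> infdist u (TG u) + dist xs u" by (rule infdist_triangle)
        then have "\<gamma> * infdist xs (TG u) \<le> \<gamma> * (dist u xs + infdist u (TG u))"
          using coeffs by (simp add: mult_left_mono dist_commute)
        then show ?thesis by (simp add: B_def TGxs)
      qed
      finally show ?thesis .
    qed
    have "dist u xs - B \<le> infdist u (TG u)"
    proof (rule ge[OF TGne])
      fix a assume a: "a \<in> TG u"
      have "ereal (dist a xs) \<le> excess (TG u) {xs}"
        unfolding excess_def using a by (auto intro: SUP_upper)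
      also have "\<dots> \<le> Hpm (TG u) {xs}" by (simp add: Hpm_def)
      also have "\<dots> \<le> ereal B" by (rule H)
      finally have "dist a xs \<le> B" by simp
      moreover have "dist u xs \<le> dist u a + dist a xs" by (rule dist_triangle)
      ultimately show "dist u xs - B \<le> dist u a" by simp
    qed
    then show ?thesis by (simp add: B_def s_def algebra_simps)
  qed
  have key2: "dist u xs \<le> ((1 + \<gamma>) * L / (1 - s)) * infdist u (T u)" for u
  proof -
    have s1: "0 < 1 - s" using coeffs by (simp add: s_def)
    have "(1 - s) * dist u xs \<le> (1 + \<gamma>) * (L * infdist u (T u))"
      using key[of u] iii[of u] coeffs by (smt (verit, ccfv_SIG) TG_def mult_left_mono)
    then show ?thesis using s1 by (simp add: field_simps)
  qed
  have "SFix T = {xs}"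
  proof
    show "SFix T \<subseteq> {xs}"
    proof
      fix y assume "y \<in> SFix T"
      then have "T y = {y}" by (simp add: SFix_def)
      then have "dist y xs \<le> 0" using key2[of y] by simp
      then show "y \<in> {xs}" by simp
    qed
  qed (use xs_SFix in auto)
  moreover have "u \<longlonglongrightarrow> xs" if hu: "(\<lambda>n. infdist (u n) (T (u n))) \<longlonglongrightarrow> 0" for u :: "nat \<Rightarrow> 'a"
  proof -
    have "(\<lambda>n. ((1 + \<gamma>) * L / (1 - s)) * infdist (u n) (T (u n))) \<longlonglongrightarrow> 0"
      using tendsto_mult_right_zero[OF hu] .
    then have "(\<lambda>n. dist (u n) xs) \<longlonglongrightarrow> 0"
    proof (rule Lim_null_comparison[rotated])
      have "norm (dist (u n) xs) \<le> ((1 + \<gamma>) * L / (1 - s)) * infdist (u n) (T (u n))" for n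
        using key2[of "u n"] by (simp only: real_norm_def abs_of_nonneg[OF zero_le_dist])
      then show "\<forall>\<^sub>F n in sequentially. norm (dist (u n) xs) \<le> ((1 + \<gamma>) * L / (1 - s)) * infdist (u n) (T (u n))"
        by (rule always_eventually[OF allI])
    qed
    then show ?thesis by (rule tendsto_dist_iff[THEN iffD2])
  qed
  ultimately show ?thesis by blast
qed

end
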